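(* There are constants $C\in(0,\infty)$, $c\in(0,1)$ and, for every $\epsilon>0$, an $N_\epsilon\in\mathbb N$ such that for all $N\ge N_\epsilon$, all $s\in(0,\infty)\cap\frac1{\log N}\mathbb N$ and all $t\in(0,1]\cap\frac1N\mathbb N$, $$\P\big(\tau^{(N)}_{s\log N}=tN\big)\le C\,\frac1N\,\frac st\,t^{(1-\epsilon)s}e^{-cs\log^+(cs)}.$$ Consequently there is $C'\in(0,\infty)$ such that for all $N$ large enough and such $s,t$: $\P(\tau^{(N)}_{s\log N}=tN)\le C'\frac1Nf_{cs}(t)$.
   Context: Positive reals $r(n)=\frac an(1+o(1))$, $a\in(0,\infty)$, $R_N=\sum_{n\le N}r(n)$; $(T^{(N)}_i)$ i.i.d. with $\P(T^{(N)}_i=n)=\frac{r(n)}{R_N}\mathbf1_{\{1,\dots,N\}}(n)$; $\tau^{(N)}_k=\sum_{i\le k}T^{(N)}_i$. $\log^+x=\max(\log x,0)$. $f_s$ is the density of $Y_s$, $Y$ the Dickman subordinator (Lévy measure $\frac1t\mathbf1_{(0,1)}(t)\mathrm dt$); on $(0,1]$, $f_s(t)=\frac{s\,t^{s-1}e^{-\gamma s}}{\Gamma(s+1)}$. *)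

theory Defs
  imports "HOL-Analysis.Analysis"
begin

definition RN :: "(nat \<Rightarrow> real) \<Rightarrow> nat \<Rightarrow> real" where
  "RN r N = (\<Sum>n = 1..N. r n)"

definition stepP :: "(nat \<Rightarrow> real) \<Rightarrow> nat \<Rightarrow> nat \<Rightarrow> real" where
  "stepP r N n = (if 1 \<le> n \<and> n \<le> N then r n / RN r N else 0)"

text \<open>tauP r N k m = P(tau^(N)_k = m), where tau_k is the sum of k i.i.d. copies
  of T^(N); i.e. the k-fold convolution of the step law (tau_0 = 0).\<close>
fun tauP :: "(nat \<Rightarrow> real) \<Rightarrow> nat \<Rightarrow> nat \<Rightarrow> nat \<Rightarrow> real" where
  "tauP r N 0 m = (if m = 0 then 1 else 0)"
| "tauP r N (Suc k) m = (\<Sum>n = 1..m. stepP r N n * tauP r N k (m - n))"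

definition logplus :: "real \<Rightarrow> real" where
  "logplus x = max (ln x) 0"

text \<open>Density of the Dickman subordinator Y_s on (0,1]: f_s(t) = s t^(s-1) e^(-gamma s)/Gamma(s+1).
  Only used for t in (0,1].\<close>
definition dickman_density :: "real \<Rightarrow> real \<Rightarrow> real" where
  "dickman_density s t = s * t powr (s - 1) * exp (- euler_mascheroni * s) / Gamma (s + 1)"

end

theory Submission
  imports Defs "HOL-Computational_Algebra.Polynomial"
begin


definition PP :: "(nat \<Rightarrow> real) \<Rightarrow> nat \<Rightarrow> real poly" where
  "PP r N = (\<Sum>n\<le>N. monom (stepP r N n) n)"

lemma coeff_PP: "coeff (PP r N) n = stepP r N n"
proof -
  have "coeff (PP r N) n = (\<Sum>x\<le>N. if x = n then stepP r N x else 0)"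
    unfolding PP_def coeff_sum by simp
  also have "\<dots> = stepP r N n"
    by (cases "n \<le> N") (auto simp: stepP_def)
  finally show ?thesis .
qed

lemma poly_PP: "poly (PP r N) x = (\<Sum>n\<le>N. stepP r N n * x ^ n)"
  unfolding PP_def poly_sum by (simp add: poly_monom)

lemma stepP_0 [simp]: "stepP r N 0 = 0"
  by (simp add: stepP_def)

lemma tauP_coeff: "tauP r N k m = coeff (PP r N ^ k) m"
proof (induction k arbitrary: m)
  case 0
  then show ?case by simp
next
  case (Suc k)
  have "coeff (PP r N ^ Suc k) m = (\<Sum>i\<le>m. stepP r N i * tauP r N k (m - i))"
    by (simp add: coeff_mult coeff_PP Suc)
  also have "{..m} = insert 0 {1..m}" by auto
  also have "(\<Sum>i\<in>insert 0 {1..m}. stepP r N i * tauP r N k (m - i))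
      = (\<Sum>i=1..m. stepP r N i * tauP r N k (m - i))" by simp
  finally show ?case by simp
qed

lemma stepP_nonneg:
  assumes "\<And>n. 1 \<le> n \<Longrightarrow> 0 < r n"
  shows "0 \<le> stepP r N n"
proof -
  have "0 \<le> RN r N" unfolding RN_def using assms by (intro sum_nonneg) (auto intro: less_imp_le)
  moreover have "0 \<le> r n" if "1 \<le> n" using assms[OF that] by simp
  ultimately show ?thesis unfolding stepP_def by simp
qed

lemma tauP_nonneg:
  assumes "\<And>n. 1 \<le> n \<Longrightarrow> 0 < r n"
  shows "0 \<le> tauP r N k m"
  by (induction k arbitrary: m) (auto intro!: sum_nonneg mult_nonneg_nonneg stepP_nonneg assms)

lemma RN_pos:
  assumes "\<And>n. 1 \<le> n \<Longrightarrow> 0 < r n" "1 \<le> N"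
  shows "0 < RN r N"
  unfolding RN_def using assms by (intro sum_pos) auto

lemma sum_stepP:
  assumes "\<And>n. 1 \<le> n \<Longrightarrow> 0 < r n" "1 \<le> N"
  shows "(\<Sum>n\<le>N. stepP r N n) = 1"
proof -
  have "{..N} = insert 0 {1..N}" by auto
  then have "(\<Sum>n\<le>N. stepP r N n) = (\<Sum>n=1..N. r n / RN r N)"
    by (simp add: stepP_def)
  also have "\<dots> = RN r N / RN r N" unfolding RN_def by (rule sum_divide_distrib[symmetric])
  also have "\<dots> = 1" using RN_pos[of r N] assms by simp
  finally show ?thesis .
qed

lemma poly_PP_1:
  assumes "\<And>n. 1 \<le> n \<Longrightarrow> 0 < r n" "1 \<le> N"
  shows "poly (PP r N) 1 = 1"
  using sum_stepP[OF assms] by (simp add: poly_PP)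

lemma deriv_identity:
  assumes "1 \<le> m"
  shows "real m * tauP r N (Suc j) m =
         real (Suc j) * (\<Sum>i<m. tauP r N j i * (real (m - i) * stepP r N (m - i)))"
proof -
  obtain m' where m: "m = Suc m'" using assms by (cases m) auto
  have "coeff (pderiv (PP r N ^ Suc j)) m' = real m * tauP r N (Suc j) m"
    by (simp add: coeff_pderiv tauP_coeff m)
  moreover have "coeff (pderiv (PP r N ^ Suc j)) m' =
     real (Suc j) * (\<Sum>i\<le>m'. tauP r N j i * (real (Suc (m' - i)) * stepP r N (Suc (m' - i))))"
    unfolding pderiv_power_Suc mult_smult_left coeff_smult coeff_mult
    by (simp add: coeff_pderiv coeff_PP tauP_coeff)
  moreover have "(\<Sum>i\<le>m'. tauP r N j i * (real (Suc (m' - i)) * stepP r N (Suc (m' - i))))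
     = (\<Sum>i<m. tauP r N j i * (real (m - i) * stepP r N (m - i)))"
    unfolding m lessThan_Suc_atMost[symmetric]
    by (intro sum.cong) (auto simp: Suc_diff_le)
  ultimately show ?thesis by simp
qed

lemma tail_bound:
  fixes Q :: "real poly"
  assumes "\<And>i. 0 \<le> coeff Q i" "0 < x" "x \<le> 1"
  shows "(\<Sum>i<m. coeff Q i) \<le> poly Q x / x ^ m"
proof -
  have "(\<Sum>i<m. coeff Q i) \<le> (\<Sum>i<m. coeff Q i * x ^ i / x ^ m)"
  proof (intro sum_mono)
    fix i assume "i \<in> {..<m}"
    then have "x ^ m \<le> x ^ i" using assms by (intro power_decreasing) auto
    then have "1 \<le> x ^ i / x ^ m" using assms by simp
    then show "coeff Q i \<le> coeff Q i * x ^ i / x ^ m"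
      using assms(1)[of i] mult_left_mono[of 1 "x ^ i / x ^ m" "coeff Q i"] by simp
  qed
  also have "\<dots> \<le> (\<Sum>i\<le>degree Q + m. coeff Q i * x ^ i / x ^ m)"
    using assms by (intro sum_mono2) auto
  also have "\<dots> = (\<Sum>i\<le>degree Q. coeff Q i * x ^ i / x ^ m)"
    by (intro sum.mono_neutral_right) (auto simp: coeff_eq_0)
  also have "\<dots> = poly Q x / x ^ m"
    by (simp add: poly_altdef sum_divide_distrib)
  finally show ?thesis .
qed



lemma harm_lower:
  assumes "1 \<le> h"
  shows "ln (real N + 1) - ln (real h) \<le> (\<Sum>n=h..N. 1 / real n)"
proof (induction N)
  case 0
  then show ?case using assms by (cases "h = 0") auto
next
  case (Suc N)
  show ?case
  proof (cases "h \<le> Suc N")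
    case False
    then have "real (Suc N) + 1 \<le> real h" by simp
    then have "ln (real (Suc N) + 1) \<le> ln (real h)" by simp
    then show ?thesis using False by simp
  next
    case True
    have "(\<Sum>n=h..Suc N. 1 / real n) = (\<Sum>n=h..N. 1 / real n) + 1 / real (Suc N)"
      using True by (simp add: atLeastAtMostSuc_conv add.commute)
    moreover have "ln (real (Suc N) + 1) - ln (real N + 1) \<le> 1 / real (Suc N)"
    proof -
      have "ln ((real N + 2) / (real N + 1)) \<le> (real N + 2) / (real N + 1) - 1"
        by (intro ln_le_minus_one) auto
      moreover have "ln ((real N + 2) / (real N + 1)) = ln (real N + 2) - ln (real N + 1)"
        by (rule ln_divide_pos) auto
      moreover have "(real N + 2) / (real N + 1) - 1 = 1 / real (Suc N)"
        by (simp add: field_simps)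
      ultimately show ?thesis by (simp add: add.commute)
    qed
    ultimately show ?thesis using Suc.IH by linarith
  qed
qed

lemma frac_aux: "0 < (a::real) \<Longrightarrow> 0 < b \<Longrightarrow> b \<le> 2*a \<Longrightarrow> 1/a \<le> 2/b"
  by (simp add: divide_simps)

lemma harm_sq_aux:
  assumes "1 \<le> h" "h \<le> Suc N"
  shows "(\<Sum>n=h..N. 1 / (real n)^2) \<le> 2 / real h - 2 / (real N + 1)"
  using assms(2)
proof (induction N)
  case 0
  then have "h = 1" using assms by simp
  then show ?case by simp
next
  case (Suc N)
  show ?case
  proof (cases "h = Suc (Suc N)")
    case True
    then show ?thesis by simp
  next
    case False
    then have hle: "h \<le> Suc N" using Suc.prems by simp
    have "(\<Sum>n=h..Suc N. 1 / (real n)^2) = (\<Sum>n=h..N. 1 / (real n)^2) + 1 / (real (Suc N))^2"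
      using hle by (simp add: atLeastAtMostSuc_conv add.commute)
    moreover have "1 / (real (Suc N))^2 \<le> 2 / (real N + 1) - 2 / (real (Suc N) + 1)"
    proof -
      have "(real N + 1) * (real N + 2) \<le> 2 * (real N + 1)^2"
        by (simp add: power2_eq_square algebra_simps)
      then have "1 / (real N + 1)^2 \<le> 2 / ((real N + 1) * (real N + 2))"
        by (intro frac_aux) auto
      also have "\<dots> = 2 / (real N + 1) - 2 / (real N + 2)"
        by (simp add: field_simps)
      finally show ?thesis by (simp add: add.commute)
    qed
    ultimately show ?thesis using Suc.IH[OF hle] by simp
  qed
qed

lemma harm_sq:
  assumes "1 \<le> h"
  shows "real h * (\<Sum>n=h..N. 1 / (real n)^2) \<le> 2"
proof (cases "h \<le> Suc N")
  case True
  have "(\<Sum>n=h..N. 1 / (real n)^2) \<le> 2 / real h"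
    using harm_sq_aux[OF assms True] by (smt (verit) divide_nonneg_nonneg of_nat_0_le_iff)
  then show ?thesis using assms by (simp add: field_simps)
next
  case False
  then show ?thesis by simp
qed

lemma harm_upper:
  "(\<Sum>n=1..N. 1 / real n) \<le> ln (real N) + 1"
proof (induction N)
  case 0
  then show ?case by simp
next
  case (Suc N)
  show ?case
  proof (cases "N = 0")
    case True
    then show ?thesis by simp
  next
    case False
    have "1 / real (Suc N) \<le> ln (real (Suc N)) - ln (real N)"
    proof -
      have "ln (real N / real (Suc N)) \<le> real N / real (Suc N) - 1"
        using False by (intro ln_le_minus_one) auto
      moreover have "ln (real N / real (Suc N)) = ln (real N) - ln (real (Suc N))"
        using False by (simp add: ln_div)
      moreover have "real N / real (Suc N) - 1 = - (1 / real (Suc N))"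
        by (simp add: field_simps)
      ultimately show ?thesis by simp
    qed
    then show ?thesis using Suc.IH by simp
  qed
qed



lemma est_core:
  assumes rpos: "\<And>n. 1 \<le> n \<Longrightarrow> 0 < r n"
    and Abd: "\<And>n. real n * stepP r N n \<le> B"
    and m1: "1 \<le> m"
  shows "tauP r N (Suc j) m \<le> B * real (Suc j) / real m * (\<Sum>i<m. tauP r N j i)"
proof -
  have "real m * tauP r N (Suc j) m =
         real (Suc j) * (\<Sum>i<m. tauP r N j i * (real (m - i) * stepP r N (m - i)))"
    by (rule deriv_identity[OF m1])
  also have "\<dots> \<le> real (Suc j) * (\<Sum>i<m. tauP r N j i * B)"
    by (intro mult_left_mono sum_mono mult_left_mono Abd tauP_nonneg rpos) auto
  also have "\<dots> = real (Suc j) * B * (\<Sum>i<m. tauP r N j i)"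
    by (simp add: sum_distrib_left[symmetric] sum_distrib_right[symmetric] mult.commute mult.left_commute)
  finally have "real m * tauP r N (Suc j) m \<le> real (Suc j) * B * (\<Sum>i<m. tauP r N j i)" .
  then show ?thesis using m1 by (simp add: field_simps)
qed

lemma tail_total:
  assumes rpos: "\<And>n. 1 \<le> n \<Longrightarrow> 0 < r n" and N1: "1 \<le> N"
  shows "(\<Sum>i<m. tauP r N j i) \<le> 1"
proof -
  have "(\<Sum>i<m. coeff (PP r N ^ j) i) \<le> poly (PP r N ^ j) 1 / 1 ^ m"
    by (rule tail_bound) (auto simp: tauP_coeff[symmetric] intro: tauP_nonneg rpos)
  also have "\<dots> = 1" using poly_PP_1[of r N] rpos N1 by simp
  finally show ?thesis by (simp add: tauP_coeff)
qed

lemma est1: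
  assumes rpos: "\<And>n. 1 \<le> n \<Longrightarrow> 0 < r n" and N1: "1 \<le> N"
    and Abd: "\<And>n. real n * stepP r N n \<le> B"
    and k1: "1 \<le> k" and m1: "1 \<le> m"
  shows "tauP r N k m \<le> B * real k / real m"
proof -
  obtain j where k: "k = Suc j" using k1 by (cases k) auto
  have B0: "0 \<le> B" using Abd[of 0] by simp
  have "tauP r N k m \<le> B * real k / real m * (\<Sum>i<m. tauP r N j i)"
    unfolding k by (rule est_core[OF rpos Abd m1])
  also have "\<dots> \<le> B * real k / real m * 1"
    using B0 by (intro mult_left_mono tail_total rpos N1) auto
  finally show ?thesis by simp
qed

lemma exp_neg_le_inv: "0 < (y::real) \<Longrightarrow> exp (- y) \<le> 1 / y"
proof -
  assume y: "0 < y"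
  have "y \<le> exp y" using exp_ge_add_one_self[of y] by linarith
  then show ?thesis using y by (simp add: exp_minus field_simps)
qed



lemma est2:
  assumes rpos: "\<And>n. 1 \<le> n \<Longrightarrow> 0 < r n" and N1: "1 \<le> N"
    and Abd: "\<And>n. real n * stepP r N n \<le> B"
    and L1: "1 \<le> ln (real N)"
    and d0: "0 \<le> \<delta>" and d1: "\<delta> \<le> 1"
    and n01: "1 \<le> n0" and n0L: "real n0 \<le> ln (real N)"
    and low: "\<And>n. n0 \<le> n \<Longrightarrow> n \<le> N \<Longrightarrow> (1 - \<delta>) / (real n * ln (real N)) \<le> stepP r N n"
    and k1: "1 \<le> k" and km: "k \<le> m" and mN: "m \<le> N"
    and ts: "real m / real N \<le> real k / ln (real N)"
  shows "tauP r N k m \<le> B * real k / real m *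
     exp (1 + 4 * (real k / ln (real N)) - (1 - \<delta>) * (real k / ln (real N)) *
          ln ((real k / ln (real N)) / (real m / real N)))"
proof -
  define L where "L = ln (real N)"
  define s where "s = real k / L"
  define t where "t = real m / real N"
  define y where "y = real k / (real m * L)"
  define x where "x = exp (- y)"
  define h where "h = nat \<lceil>1 / y\<rceil>"
  obtain j where k: "k = Suc j" using k1 by (cases k) auto
  have L0: "0 < L" using L1 L_def by simp
  have m1: "1 \<le> m" using k1 km by simp
  have y0: "0 < y" unfolding y_def using L0 k1 m1 by simp
  have x0: "0 < x" and x1: "x \<le> 1" unfolding x_def using y0 by auto
  have B0: "0 \<le> B" using Abd[of 0] by simp
  define T where "T = (\<Sum>i<m. tauP r N j i)"
  have step1: "tauP r N k m \<le> B * real k / real m * T"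
    unfolding k T_def by (rule est_core[OF rpos Abd m1])
  have "(\<Sum>i<m. coeff (PP r N ^ j) i) \<le> poly (PP r N ^ j) x / x ^ m"
    by (rule tail_bound) (auto simp: tauP_coeff[symmetric] intro: tauP_nonneg rpos x0 x1)
  then have step2: "T \<le> poly (PP r N) x ^ j / x ^ m"
    by (simp add: T_def tauP_coeff)
  have xm: "x ^ m = exp (- s)"
  proof -
    have "x ^ m = exp (real m * (- y))" unfolding x_def by (simp add: exp_of_nat_mult[symmetric])
    also have "real m * (- y) = - s" unfolding y_def s_def using m1 by simp
    finally show ?thesis .
  qed
  define S where "S = (\<Sum>n\<le>N. stepP r N n * (1 - x ^ n))"
  have polyS: "poly (PP r N) x = 1 - S"
  proof -
    have "S = (\<Sum>n\<le>N. stepP r N n) - (\<Sum>n\<le>N. stepP r N n * x ^ n)"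
      unfolding S_def by (simp add: algebra_simps sum_subtractf)
    then show ?thesis using sum_stepP[of r N] rpos N1 by (simp add: poly_PP)
  qed
  have poly0: "0 \<le> poly (PP r N) x"
    unfolding poly_PP using x0 by (intro sum_nonneg mult_nonneg_nonneg stepP_nonneg rpos) auto
  have "poly (PP r N) x \<le> exp (- S)" using polyS exp_ge_add_one_self[of "- S"] by simp
  then have "poly (PP r N) x ^ j \<le> exp (- S) ^ j" using poly0 by (intro power_mono) auto
  also have "\<dots> = exp (real j * (- S))" by (simp add: exp_of_nat_mult[symmetric])
  finally have step5: "poly (PP r N) x ^ j \<le> exp (- (real j * S))" by simp
  have iy: "1 / y = real m * L / real k" unfolding y_def by simp
  have iyL: "L \<le> 1 / y" unfolding iy using km L0 k1
    by (simp add: field_simps mult_right_mono)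
  have h_ge: "1 / y \<le> real h" unfolding h_def by (rule real_nat_ceiling_ge)
  have h_le: "real h \<le> 2 / y"
  proof -
    have "real h = real_of_int \<lceil>1 / y\<rceil>" unfolding h_def using y0 by simp
    then have "real h \<le> 1 / y + 1" using of_int_ceiling_le_add_one[of "1 / y"] by simp
    then show ?thesis using iyL L1 L_def by simp
  qed
  have h1: "1 \<le> h" using h_ge iyL L1 L_def by linarith
  have hn0: "n0 \<le> h" using h_ge iyL n0L L_def by linarith
  have termb: "(1 - \<delta>) / L * (1 / real n - real h * (1 / (real n)^2)) \<le> stepP r N n * (1 - x ^ n)"
    if n: "n \<in> {h..N}" for n
  proof -
    have nh: "real h \<le> real n" using n by simp
    have npos: "0 < real n" using n h1 by simp
    have "x ^ n = exp (- (real n * y))" unfolding x_def by (simp add: exp_of_nat_mult[symmetric])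
    also have "\<dots> \<le> 1 / (real n * y)" using npos y0 by (intro exp_neg_le_inv) simp
    also have "\<dots> = (1 / y) / real n" by simp
    also have "\<dots> \<le> real h / real n" using h_ge npos by (intro divide_right_mono) auto
    finally have xn: "x ^ n \<le> real h / real n" .
    have hn: "0 \<le> 1 - real h / real n" using nh npos by simp
    have lowb: "(1 - \<delta>) / (real n * L) \<le> stepP r N n"
      using low[of n] n hn0 unfolding L_def by simp
    have "(1 - \<delta>) / L * (1 / real n - real h * (1 / (real n)^2)) = (1 - \<delta>) / (real n * L) * (1 - real h / real n)"
      using npos by (simp add: field_simps power2_eq_square)
    also have "\<dots> \<le> stepP r N n * (1 - x ^ n)"
      using lowb hn xn d1 L0 npos
      by (intro mult_mono) (auto intro: stepP_nonneg rpos)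
    finally show ?thesis .
  qed
  have "(\<Sum>n=h..N. (1 - \<delta>) / L * (1 / real n - real h * (1 / (real n)^2))) \<le> (\<Sum>n=h..N. stepP r N n * (1 - x ^ n))"
    by (intro sum_mono termb)
  also have "\<dots> \<le> S" unfolding S_def
    using x0 x1 by (intro sum_mono2) (auto intro!: mult_nonneg_nonneg stepP_nonneg rpos power_le_one)
  finally have S0: "(\<Sum>n=h..N. (1 - \<delta>) / L * (1 / real n - real h * (1 / (real n)^2))) \<le> S" .
  have "(\<Sum>n=h..N. (1 - \<delta>) / L * (1 / real n - real h * (1 / (real n)^2)))
     = (1 - \<delta>) / L * ((\<Sum>n=h..N. 1 / real n) - real h * (\<Sum>n=h..N. 1 / (real n)^2))"
    by (simp only: sum_subtractf sum_distrib_left right_diff_distrib)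
  with S0 have S1: "(1 - \<delta>) / L * ((\<Sum>n=h..N. 1 / real n) - real h * (\<Sum>n=h..N. 1 / (real n)^2)) \<le> S"
    by simp
  have "ln (real N + 1) - ln (real h) - 2 \<le> (\<Sum>n=h..N. 1 / real n) - real h * (\<Sum>n=h..N. 1 / (real n)^2)"
    using harm_lower[OF h1, of N] harm_sq[OF h1, of N] by linarith
  moreover have "ln (s / t) - 3 \<le> ln (real N + 1) - ln (real h) - 2"
  proof -
    have st: "s / t = real N * y" unfolding s_def t_def y_def using m1 N1 L0 by (simp add: field_simps)
    have "ln (s / t) = ln (real N) - ln (1 / y)" unfolding st using N1 y0 by (simp add: ln_mult ln_div)
    moreover have "ln (real h) \<le> ln (2 / y)" using h_le h1 y0 by (subst ln_le_cancel_iff) auto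
    moreover have "ln (2 / y) = ln 2 + ln (1 / y)" using y0 by (simp add: ln_div)
    moreover have "ln (real N) \<le> ln (real N + 1)" using N1 by simp
    ultimately show ?thesis using ln_2_less_1 by linarith
  qed
  ultimately have lnS: "ln (s / t) - 3 \<le> (\<Sum>n=h..N. 1 / real n) - real h * (\<Sum>n=h..N. 1 / (real n)^2)"
    by linarith
  then have S2: "(1 - \<delta>) / L * (ln (s / t) - 3) \<le> S"
  proof -
    have "(1 - \<delta>) / L * (ln (s / t) - 3) \<le>
       (1 - \<delta>) / L * ((\<Sum>n=h..N. 1 / real n) - real h * (\<Sum>n=h..N. 1 / (real n)^2))"
      using lnS d1 L0 by (intro mult_left_mono) auto
    then show ?thesis using S1 by linarith
  qed
  have "T \<le> exp (- (real j * S)) / exp (- s)"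
  proof -
    have "poly (PP r N) x ^ j / x ^ m \<le> exp (- (real j * S)) / x ^ m"
      using step5 x0 by (intro divide_right_mono) auto
    then show ?thesis using step2 xm by simp
  qed
  also have "\<dots> = exp (s - real j * S)" by (simp add: exp_diff exp_minus field_simps)
  also have "\<dots> \<le> exp (s - real j * ((1 - \<delta>) / L * (ln (s / t) - 3)))"
  proof -
    have "real j * ((1 - \<delta>) / L * (ln (s / t) - 3)) \<le> real j * S"
      using S2 by (intro mult_left_mono) auto
    then show ?thesis by simp
  qed
  also have "\<dots> \<le> exp (1 + 4 * s - (1 - \<delta>) * s * ln (s / t))"
  proof -
    define u where "u = ln (s / t)"
    have t0: "0 < t" unfolding t_def using m1 N1 by simp
    have s0: "0 < s" unfolding s_def using k1 L0 by simp
    have "t \<le> s" using ts unfolding s_def t_def L_def .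
    then have "1 \<le> s / t" using t0 by simp
    then have u0: "0 \<le> u" unfolding u_def by simp
    have uL: "u \<le> L"
    proof -
      have "s / t = real N * y" unfolding s_def t_def y_def using m1 N1 L0 by (simp add: field_simps)
      also have "\<dots> \<le> real N * 1"
      proof (intro mult_left_mono)
        have "1 \<le> 1 / y" using iyL L1 L_def by simp
        then show "y \<le> 1" using y0 by (simp add: field_simps)
      qed simp
      also have "\<dots> = real N" by simp
      finally show ?thesis unfolding u_def L_def using s0 t0 N1 by (subst ln_le_cancel_iff) auto
    qed
    define w where "w = real j / L"
    have ws: "w = s - 1 / L" unfolding w_def s_def k using L0 by (simp add: field_simps)
    have w0: "0 \<le> w" unfolding w_def using L0 by simp
    have e1: "real j * ((1 - \<delta>) / L * (u - 3)) = (1 - \<delta>) * w * u - 3 * (1 - \<delta>) * w"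
      unfolding w_def using L0 by (simp add: field_simps)
    have e2: "(1 - \<delta>) * w * u = (1 - \<delta>) * s * u - (1 - \<delta>) * (u / L)"
      unfolding ws using L0 by (simp add: field_simps)
    have f1: "(1 - \<delta>) * (u / L) \<le> 1"
    proof -
      have "u / L \<le> 1" using uL L0 by simp
      moreover have "0 \<le> u / L" using u0 L0 by simp
      ultimately show ?thesis using d0 d1 by (intro mult_le_one) auto
    qed
    have f2: "(1 - \<delta>) * w \<le> s"
    proof -
      have "(1 - \<delta>) * w \<le> w" using w0 d0 d1 by (intro mult_left_le_one_le) auto
      moreover have "w \<le> s" using ws L0 by simp
      ultimately show ?thesis by linarith
    qed
    have "s - real j * ((1 - \<delta>) / L * (u - 3)) \<le> 1 + 4 * s - (1 - \<delta>) * s * u"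
      using e1 e2 f1 f2 by linarith
    then show ?thesis unfolding u_def by simp
  qed
  finally have Tb: "T \<le> exp (1 + 4 * s - (1 - \<delta>) * s * ln (s / t))" .
  then have "tauP r N k m \<le> B * real k / real m * exp (1 + 4 * s - (1 - \<delta>) * s * ln (s / t))"
  proof -
    have "B * real k / real m * T \<le> B * real k / real m * exp (1 + 4 * s - (1 - \<delta>) * s * ln (s / t))"
      using Tb B0 by (intro mult_left_mono) auto
    then show ?thesis using step1 by linarith
  qed
  then show ?thesis unfolding s_def t_def L_def .
qed



lemma Gamma_le_1:
  assumes "1 \<le> y" "y \<le> (2::real)"
  shows "Gamma y \<le> 1"
proof -
  have cv: "convex_on {1..2} (ln \<circ> Gamma :: real \<Rightarrow> real)"
    by (rule convex_on_subset[OF log_convex_Gamma_real]) auto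
  have "(ln \<circ> Gamma) y \<le> max ((ln \<circ> Gamma) 1) ((ln \<circ> Gamma) 2)"
    by (rule convex_on_le_max[OF cv]) (use assms in auto)
  moreover have "Gamma (2::real) = 1" using Gamma_fact[of 1] by simp
  ultimately have "ln (Gamma y) \<le> 0" by simp
  moreover have "0 < Gamma y" using assms by simp
  ultimately show ?thesis by simp
qed

lemma Gamma_le_pow:
  assumes "1 \<le> (y::real)"
  shows "Gamma y \<le> exp (y * ln y)"
proof (cases "y \<le> 2")
  case True
  then have "Gamma y \<le> 1" using Gamma_le_1 assms by simp
  also have "1 \<le> exp (y * ln y)" using assms by simp
  finally show ?thesis .
next
  case False
  define n where "n = nat \<lceil>y\<rceil>"
  have ny: "y \<le> real n" unfolding n_def by (rule real_nat_ceiling_ge)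
  have ny2: "real n < y + 1"
  proof -
    have "real n = real_of_int \<lceil>y\<rceil>" unfolding n_def using False by simp
    then show ?thesis using ceiling_correct[of y] by linarith
  qed
  have n2: "2 \<le> n" using ny False by linarith
  have "Gamma y \<le> Gamma (real n)"
  proof (cases "y = real n")
    case False
    then have "y < real n" using ny by simp
    then show ?thesis using \<open>\<not> y \<le> 2\<close> by (intro less_imp_le[OF Gamma_real_strict_mono]) auto
  qed simp
  also have "Gamma (real n) = fact (n - 1)"
    using Gamma_fact[of "n - 1"] n2 by (simp add: of_nat_diff)
  also have "(fact (n - 1) :: real) \<le> real ((n - 1) ^ (n - 1))" by (rule fact_le_power)
  also have "real ((n - 1) ^ (n - 1)) = (real n - 1) ^ (n - 1)" using n2 by (simp add: of_nat_diff)
  also have "\<dots> \<le> y ^ (n - 1)" using ny2 n2 by (intro power_mono) auto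
  also have "\<dots> = y powr real (n - 1)" using False by (simp add: powr_realpow)
  also have "\<dots> \<le> y powr y" using False ny2 n2 by (intro powr_mono) (auto simp: of_nat_diff)
  also have "\<dots> = exp (y * ln y)" using False by (simp add: powr_def mult.commute)
  finally show ?thesis .
qed

lemma s_ln_s: "0 < (s::real) \<Longrightarrow> s - 1 \<le> s * ln s"
proof -
  assume s: "0 < s"
  have "ln (1 / s) \<le> 1 / s - 1" using s by (intro ln_le_minus_one) auto
  then have "1 - 1 / s \<le> ln s" using s by (simp add: ln_div)
  then have "s * (1 - 1 / s) \<le> s * ln s" using s by (intro mult_left_mono) auto
  then show ?thesis using s by (simp add: algebra_simps)
qed

lemma G1:
  assumes s: "0 < (s::real)" and d0: "0 \<le> \<delta>" and d1: "\<delta> \<le> 1/2"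
  shows "4 * s - (1 - \<delta>) * s * ln s + 1/8 * s * logplus (1/8 * s) \<le> 10 * exp 20"
proof -
  have lp0: "0 \<le> logplus (1/8 * s)" unfolding logplus_def by simp
  have lp1: "logplus (1/8 * s) \<le> max (ln s) 0"
  proof -
    have "ln (1/8 * s) \<le> ln s" using s by (subst ln_le_cancel_iff) auto
    then show ?thesis unfolding logplus_def by auto
  qed
  have sls: "s - 1 \<le> s * ln s" by (rule s_ln_s[OF s])
  define P where "P = s * ln s"
  define D where "D = (1 - \<delta>) * P"
  define Z where "Z = 1/8 * s * logplus (1/8 * s)"
  have eq: "4 * s - (1 - \<delta>) * s * ln s + 1/8 * s * logplus (1/8 * s) = 4 * s - D + Z"
    unfolding D_def P_def Z_def by (simp add: mult.assoc)
  show ?thesis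
  proof (cases "s \<le> exp 20")
    case True
    have ls: "ln s \<le> 20" using True s by (metis ln_exp ln_le_cancel_iff exp_gt_zero)
    have t1: "- ((1 - \<delta>) * (s * ln s)) \<le> 1"
    proof (cases "0 \<le> ln s")
      case True
      have "0 \<le> (1 - \<delta>) * (s * ln s)" using True s d1 by (intro mult_nonneg_nonneg) auto
      then show ?thesis by linarith
    next
      case False
      then have "-1 \<le> s * ln s" using sls s by linarith
      then have "(1 - \<delta>) * (-1) \<le> (1 - \<delta>) * (s * ln s)" using d1 by (intro mult_left_mono) auto
      then show ?thesis using d0 by (simp add: algebra_simps)
    qed
    have "logplus (1/8 * s) \<le> 20" using lp1 ls by simp
    then have t2: "1/8 * s * logplus (1/8 * s) \<le> 1/8 * exp 20 * 20"
      using True s lp0 by (intro mult_mono) auto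
    have "- D \<le> 1" "Z \<le> 1/8 * exp 20 * 20" using t1 t2 unfolding D_def P_def Z_def by simp_all
    moreover have "(exp 20 / 8 + 1) * 20 = 5/2 * exp 20 + (20::real)" by simp
    ultimately show ?thesis unfolding eq using True exp_ge_add_one_self[of 20] by linarith
  next
    case False
    have ls: "20 \<le> ln s" using False s by (metis ln_exp ln_le_cancel_iff exp_gt_zero less_eq_real_def not_le)
    have t2: "1/8 * s * logplus (1/8 * s) \<le> 1/8 * s * ln s"
      using lp1 ls s by (intro mult_left_mono) auto
    have t1: "1/2 * (s * ln s) \<le> (1 - \<delta>) * (s * ln s)"
    proof -
      have "0 \<le> ln s" using ls by linarith
      then have "0 \<le> s * ln s" using s by (metis mult_nonneg_nonneg less_imp_le)
      then show ?thesis using d1 by (intro mult_right_mono) auto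
    qed
    have t3: "20 * s \<le> s * ln s" using ls s by simp
    have "1/2 * P \<le> D" "Z \<le> 1/8 * P" "20 * s \<le> P" using t1 t2 t3 unfolding D_def P_def Z_def
      by (simp_all add: mult.assoc)
    then show ?thesis unfolding eq using exp_gt_zero[of 20] s by linarith
  qed
qed

lemma G2:
  assumes s: "0 < (s::real)"
  shows "4 * s - 1/2 * s * ln s + s / 8 + (s / 8 + 1) * ln (s / 8 + 1) \<le> 10 * exp 20"
proof -
  have sls: "s - 1 \<le> s * ln s" by (rule s_ln_s[OF s])
  have l0: "0 \<le> ln (s / 8 + 1)" using s by simp
  define P where "P = s * ln s"
  define Q where "Q = (s / 8 + 1) * ln (s / 8 + 1)"
  have eq: "4 * s - 1/2 * s * ln s + s / 8 + (s / 8 + 1) * ln (s / 8 + 1) = 4 * s - 1/2 * P + s / 8 + Q"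
    unfolding P_def Q_def by (simp add: mult.assoc)
  show ?thesis
  proof (cases "s \<le> exp 20")
    case True
    have t1: "- (1/2 * (s * ln s)) \<le> 1"
    proof (cases "0 \<le> ln s")
      case True
      have "0 \<le> 1/2 * (s * ln s)" using True s by (intro mult_nonneg_nonneg) auto
      then show ?thesis by linarith
    next
      case False
      then show ?thesis using sls s by linarith
    qed
    have "s / 8 + 1 \<le> exp 20" using True exp_ge_add_one_self[of 20] by linarith
    then have "ln (s / 8 + 1) \<le> 20" using s by (metis ln_exp ln_le_cancel_iff exp_gt_zero add_pos_pos divide_pos_pos zero_less_numeral zero_less_one)
    then have t2: "(s / 8 + 1) * ln (s / 8 + 1) \<le> (exp 20 / 8 + 1) * 20"
      using True s l0 by (intro mult_mono) auto
    have "- (1/2 * P) \<le> 1" "Q \<le> (exp 20 / 8 + 1) * 20" using t1 t2 unfolding P_def Q_def by simp_all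
    moreover have "(exp 20 / 8 + 1) * 20 = 5/2 * exp 20 + (20::real)" by simp
    ultimately show ?thesis unfolding eq using True exp_ge_add_one_self[of 20] by linarith
  next
    case False
    have ls: "20 \<le> ln s" using False s by (metis ln_exp ln_le_cancel_iff exp_gt_zero less_eq_real_def not_le)
    have e8: "8 \<le> exp (20::real)" using exp_ge_add_one_self[of 20] by linarith
    have a1: "s / 8 + 1 \<le> s / 4" using False e8 by linarith
    have "ln (s / 8 + 1) \<le> ln s" using s a1 by simp
    then have t2: "(s / 8 + 1) * ln (s / 8 + 1) \<le> s / 4 * ln s"
      using a1 l0 s by (intro mult_mono) auto
    have t3: "20 * s \<le> s * ln s" using ls s by simp
    have "Q \<le> 1/4 * P" "20 * s \<le> P" using t2 t3 unfolding P_def Q_def by (simp_all add: mult.assoc)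
    then show ?thesis unfolding eq using exp_gt_zero[of 20] s by linarith
  qed
qed

lemma tauP_zero: "m < k \<Longrightarrow> tauP r N k m = 0"
proof (induction k arbitrary: m)
  case 0
  then show ?case by simp
next
  case (Suc k)
  have "\<And>n. n \<in> {1..m} \<Longrightarrow> tauP r N k (m - n) = 0" using Suc by auto
  then show ?case by simp
qed



lemma frac_cross: "0 < (b::real) \<Longrightarrow> 0 < d \<Longrightarrow> a * d \<le> c * b \<Longrightarrow> a / b \<le> c / d"
  by (simp add: divide_simps)

lemma asym_A:
  assumes a_pos: "0 < a"
    and r_pos: "\<And>n. 1 \<le> n \<Longrightarrow> 0 < r n"
    and r_asymp: "((\<lambda>n. r n * real n) \<longlongrightarrow> a) sequentially"
  shows "\<exists>A>0. \<exists>N1::nat. \<forall>N\<ge>N1. 3 \<le> N \<and> (\<forall>n. real n * stepP r N n \<le> A / ln (real N))"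
proof -
  have "Bseq (\<lambda>n. r n * real n)" using r_asymp by (intro convergent_imp_Bseq convergentI)
  then obtain B where B0: "0 < B" and Bb: "\<And>n. norm (r n * real n) \<le> B" by (auto elim: BseqE)
  have "eventually (\<lambda>n. a / 2 < r n * real n) sequentially"
    using order_tendstoD(1)[OF r_asymp, of "a / 2"] a_pos by simp
  then obtain n1 where n1: "\<And>n. n1 \<le> n \<Longrightarrow> a / 2 < r n * real n"
    by (auto simp: eventually_sequentially)
  define n2 where "n2 = max n1 1"
  have n21: "1 \<le> n2" unfolding n2_def by simp
  define N1 where "N1 = max 3 (n2 ^ 2)"
  define A where "A = 4 * B / a"
  have A0: "0 < A" unfolding A_def using B0 a_pos by simp
  have "\<forall>N\<ge>N1. 3 \<le> N \<and> (\<forall>n. real n * stepP r N n \<le> A / ln (real N))"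
  proof (intro allI impI conjI)
    fix N assume N: "N1 \<le> N"
    show N3: "3 \<le> N" using N unfolding N1_def by simp
    have Npos: "0 < real N" using N3 by simp
    have lnN: "1 \<le> ln (real N)"
    proof -
      have "exp 1 \<le> real N" using exp_le N3 by linarith
      then show ?thesis using Npos by (metis ln_exp ln_le_cancel_iff exp_gt_zero)
    qed
    have n2N: "n2 ^ 2 \<le> N" using N unfolding N1_def by simp
    have n2N': "n2 \<le> N" using n2N n21 by (metis le_trans power2_nat_le_imp_le)
    have "2 * ln (real n2) = ln (real (n2 ^ 2))" using n21 by (simp add: ln_realpow)
    also have "\<dots> \<le> ln (real N)" using n2N n21 N3 by (subst ln_le_cancel_iff) auto
    finally have ln2: "2 * ln (real n2) \<le> ln (real N)" .
    have "(\<Sum>n=n2..N. a / 2 * (1 / real n)) \<le> (\<Sum>n=n2..N. r n)"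
    proof (intro sum_mono)
      fix n assume n: "n \<in> {n2..N}"
      then have "a / 2 < r n * real n" using n1 unfolding n2_def by auto
      moreover have "0 < real n" using n n21 by simp
      ultimately show "a / 2 * (1 / real n) \<le> r n" by (simp add: field_simps)
    qed
    also have "\<dots> \<le> RN r N" unfolding RN_def using n21
    proof (intro sum_mono2)
      fix b assume "b \<in> {1..N} - {n2..N}"
      then show "0 \<le> r b" using r_pos[of b] by auto
    qed (use n21 in auto)
    finally have R1: "a / 2 * (\<Sum>n=n2..N. 1 / real n) \<le> RN r N" by (simp add: sum_distrib_left)
    have "ln (real N + 1) - ln (real n2) \<le> (\<Sum>n=n2..N. 1 / real n)" by (rule harm_lower[OF n21])
    moreover have "ln (real N) \<le> ln (real N + 1)" using Npos by simp
    ultimately have "ln (real N) / 2 \<le> (\<Sum>n=n2..N. 1 / real n)" using ln2 by linarith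
    then have "a / 2 * (ln (real N) / 2) \<le> a / 2 * (\<Sum>n=n2..N. 1 / real n)"
      using a_pos by (intro mult_left_mono) auto
    with R1 have RNb: "a / 4 * ln (real N) \<le> RN r N" by simp
    have RN0: "0 < a / 4 * ln (real N)" using a_pos lnN by simp
    fix n
    show "real n * stepP r N n \<le> A / ln (real N)"
      proof (cases "1 \<le> n \<and> n \<le> N")
        case True
        have "real n * stepP r N n = (r n * real n) / RN r N"
          using True by (simp add: stepP_def)
        also have "\<dots> \<le> B / RN r N"
          using Bb[of n] RNb RN0 by (intro divide_right_mono) auto
        also have "\<dots> \<le> B / (a / 4 * ln (real N))"
          using RNb RN0 B0 by (intro divide_left_mono) auto
        also have "\<dots> = A / ln (real N)" unfolding A_def using a_pos by simp
        finally show ?thesis .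
      next
        case False
        then show ?thesis using A0 lnN by (auto simp: stepP_def)
      qed
  qed
  then show ?thesis using A0 by blast
qed

lemma asym_low:
  assumes a_pos: "0 < a"
    and r_pos: "\<And>n. 1 \<le> n \<Longrightarrow> 0 < r n"
    and r_asymp: "((\<lambda>n. r n * real n) \<longlongrightarrow> a) sequentially"
    and d0: "0 < \<delta>" and d1: "\<delta> \<le> 1"
  shows "\<exists>n0\<ge>1. \<exists>N2::nat. \<forall>N\<ge>N2. \<forall>n. n0 \<le> n \<longrightarrow> n \<le> N \<longrightarrow>
            (1 - \<delta>) / (real n * ln (real N)) \<le> stepP r N n"
proof -
  define \<eta> where "\<eta> = \<delta> / 3"
  have e0: "0 < \<eta>" using d0 unfolding \<eta>_def by simp
  have "eventually (\<lambda>n. a * (1 - \<eta>) < r n * real n) sequentially"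
    using order_tendstoD(1)[OF r_asymp, of "a * (1 - \<eta>)"] a_pos e0 by simp
  moreover have "eventually (\<lambda>n. r n * real n < a * (1 + \<eta>)) sequentially"
    using order_tendstoD(2)[OF r_asymp, of "a * (1 + \<eta>)"] a_pos e0 by simp
  ultimately have "eventually (\<lambda>n. a * (1 - \<eta>) < r n * real n \<and> r n * real n < a * (1 + \<eta>)) sequentially"
    by (rule eventually_conj)
  then obtain n1 where n1: "\<And>n. n1 \<le> n \<Longrightarrow> a * (1 - \<eta>) < r n * real n \<and> r n * real n < a * (1 + \<eta>)"
    by (auto simp: eventually_sequentially)
  define n0 where "n0 = max n1 1"
  have n01: "1 \<le> n0" unfolding n0_def by simp
  define K0 where "K0 = (\<Sum>n=1..n0. r n)"
  define M where "M = (K0 + a * (1 + \<eta>)) / (a * \<eta>)"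
  define N2 where "N2 = max (max n0 3) (nat \<lceil>exp M\<rceil>)"
  have "\<forall>N\<ge>N2. \<forall>n. n0 \<le> n \<longrightarrow> n \<le> N \<longrightarrow> (1 - \<delta>) / (real n * ln (real N)) \<le> stepP r N n"
  proof (intro allI impI)
    fix N n assume N: "N2 \<le> N" and n: "n0 \<le> n" "n \<le> N"
    have N3: "3 \<le> N" and n0N: "n0 \<le> N" using N unfolding N2_def by auto
    have Npos: "0 < real N" using N3 by simp
    have lnN: "1 \<le> ln (real N)"
    proof -
      have "exp 1 \<le> real N" using exp_le N3 by linarith
      then show ?thesis using Npos by (metis ln_exp ln_le_cancel_iff exp_gt_zero)
    qed
    have "exp M \<le> real N"
    proof -
      have "exp M \<le> real (nat \<lceil>exp M\<rceil>)" by (rule real_nat_ceiling_ge)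
      also have "\<dots> \<le> real N"
      proof -
        have "nat \<lceil>exp M\<rceil> \<le> N" using N unfolding N2_def by simp
        then show ?thesis by (simp only: of_nat_le_iff)
      qed
      finally show ?thesis .
    qed
    then have lnM: "M \<le> ln (real N)" using Npos by (metis ln_exp ln_le_cancel_iff exp_gt_zero)
    have "RN r N \<le> (\<Sum>n=1..N. (if n \<le> n0 then r n else 0) + a * (1 + \<eta>) * (1 / real n))"
      unfolding RN_def
    proof (intro sum_mono)
      fix k assume k: "k \<in> {1..N}"
      show "r k \<le> (if k \<le> n0 then r k else 0) + a * (1 + \<eta>) * (1 / real k)"
      proof (cases "k \<le> n0")
        case True
        have "0 \<le> a * (1 + \<eta>) * (1 / real k)" using a_pos e0 by simp
        then show ?thesis using True by simp
      next
        case False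
        then have "r k * real k < a * (1 + \<eta>)" using n1[of k] unfolding n0_def by auto
        moreover have "0 < real k" using k by simp
        ultimately show ?thesis using False by (simp add: field_simps)
      qed
    qed
    also have "\<dots> = (\<Sum>n=1..N. (if n \<le> n0 then r n else 0)) + a * (1 + \<eta>) * (\<Sum>n=1..N. 1 / real n)"
      by (simp add: sum.distrib sum_distrib_left)
    also have "(\<Sum>n=1..N. (if n \<le> n0 then r n else 0)) = K0"
    proof -
      show ?thesis unfolding K0_def
        by (rule sum.mono_neutral_cong_right) (use n0N in auto)
    qed
    also have "a * (1 + \<eta>) * (\<Sum>n=1..N. 1 / real n) \<le> a * (1 + \<eta>) * (ln (real N) + 1)"
      using a_pos e0 harm_upper[of N] by (intro mult_left_mono) auto
    finally have RNu: "RN r N \<le> K0 + a * (1 + \<eta>) * (ln (real N) + 1)" by simp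
    have "K0 + a * (1 + \<eta>) = a * \<eta> * M" unfolding M_def using a_pos e0 by simp
    also have "\<dots> \<le> a * \<eta> * ln (real N)" using lnM a_pos e0 by (intro mult_left_mono) auto
    finally have "K0 + a * (1 + \<eta>) \<le> a * \<eta> * ln (real N)" .
    with RNu have RNu2: "RN r N \<le> a * (1 + 2 * \<eta>) * ln (real N)" by (simp add: algebra_simps)
    have RNp: "0 < RN r N" using RN_pos[of r N] r_pos N3 by simp
    have npos: "0 < real n" using n n01 by simp
    have rn: "a * (1 - \<eta>) < r n * real n" using n1[of n] n unfolding n0_def by auto
    have dd: "(1 - \<delta>) * (1 + 2 * \<eta>) \<le> 1 - \<eta>" unfolding \<eta>_def using d0
      by (simp add: algebra_simps power2_eq_square)
    have "(1 - \<delta>) * RN r N \<le> (1 - \<delta>) * (a * (1 + 2 * \<eta>) * ln (real N))"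
      using RNu2 d1 by (intro mult_left_mono) auto
    also have "\<dots> = a * ln (real N) * ((1 - \<delta>) * (1 + 2 * \<eta>))" by simp
    also have "\<dots> \<le> a * ln (real N) * (1 - \<eta>)"
      using dd a_pos lnN by (intro mult_left_mono) auto
    also have "\<dots> \<le> r n * real n * ln (real N)"
      using rn lnN by (simp add: mult.commute mult.left_commute)
    finally have "(1 - \<delta>) * RN r N \<le> r n * (real n * ln (real N))" by simp
    then have "(1 - \<delta>) / (real n * ln (real N)) \<le> r n / RN r N"
      using npos lnN RNp by (intro frac_cross) auto
    then show "(1 - \<delta>) / (real n * ln (real N)) \<le> stepP r N n"
      using n n01 by (simp add: stepP_def)
  qed
  then show ?thesis using n01 by blast
qed



lemma t_ln_t: "0 < (t::real) \<Longrightarrow> t \<le> 1 \<Longrightarrow> s \<le> t \<Longrightarrow> 0 \<le> s \<Longrightarrow> -1 \<le> s * ln t"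
proof -
  assume t: "0 < t" "t \<le> 1" and st: "s \<le> t" "0 \<le> s"
  have l: "ln t \<le> 0" using t by simp
  have "t * ln t \<le> s * ln t" using st l by (intro mult_right_mono_neg) auto
  moreover have "t - 1 \<le> t * ln t" by (rule s_ln_s[OF t(1)])
  ultimately show ?thesis using t by linarith
qed

lemma R1:
  assumes s: "0 < (s::real)" and t: "0 < t" "t \<le> 1" and d0: "0 \<le> \<delta>" and d1: "\<delta> \<le> 1/2"
    and de: "\<delta> \<le> \<epsilon>"
  shows "exp (1 + 4 * s - (1 - \<delta>) * s * ln (s / t)) \<le>
         exp (2 + 10 * exp 20) * t powr ((1 - \<epsilon>) * s) * exp (- (1/8) * s * logplus (1/8 * s))"
proof -
  define P where "P = s * ln s"
  define Q where "Q = s * ln t"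
  define Z where "Z = 1/8 * s * logplus (1/8 * s)"
  have G: "4 * s - (1 - \<delta>) * P + Z \<le> 10 * exp 20"
    using G1[OF s d0 d1] unfolding P_def Z_def by (simp add: mult.assoc)
  have Q0: "Q \<le> 0" unfolding Q_def using s t by (simp add: mult_nonneg_nonpos)
  have e1: "(1 - \<delta>) * s * ln (s / t) = (1 - \<delta>) * P - (1 - \<delta>) * Q"
    unfolding P_def Q_def using s t by (simp add: ln_div algebra_simps)
  have e2: "t powr ((1 - \<epsilon>) * s) = exp ((1 - \<epsilon>) * Q)"
    unfolding Q_def using t by (simp add: powr_def mult.assoc)
  have e3: "- (1/8) * s * logplus (1/8 * s) = - Z" unfolding Z_def by simp
  have m1: "(\<epsilon> - \<delta>) * Q \<le> 0" using de Q0 by (simp add: mult_nonneg_nonpos)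
  have "1 + 4 * s - ((1 - \<delta>) * P - (1 - \<delta>) * Q) \<le> 2 + 10 * exp 20 + (1 - \<epsilon>) * Q - Z"
    using G m1 by (simp add: algebra_simps)
  then have "exp (1 + 4 * s - ((1 - \<delta>) * P - (1 - \<delta>) * Q)) \<le> exp (2 + 10 * exp 20 + (1 - \<epsilon>) * Q - Z)"
    by simp
  also have "\<dots> = exp (2 + 10 * exp 20) * exp ((1 - \<epsilon>) * Q) * exp (- Z)"
    by (simp add: exp_add[symmetric] exp_diff)
  finally show ?thesis unfolding e1 e2 e3 .
qed

lemma R1':
  assumes s: "0 < (s::real)" and t: "0 < t" "t \<le> 1" and st: "s < t" and e: "0 < \<epsilon>"
  shows "1 \<le> exp (2 + 10 * exp 20) * t powr ((1 - \<epsilon>) * s) * exp (- (1/8) * s * logplus (1/8 * s))"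
proof -
  have "logplus (1/8 * s) = 0" unfolding logplus_def using s st t by simp
  then have e3: "exp (- (1/8) * s * logplus (1/8 * s)) = 1" by simp
  have Q: "-1 \<le> s * ln t" using t_ln_t[of t s] t st s by simp
  have Q0: "s * ln t \<le> 0" using s t by (simp add: mult_nonneg_nonpos)
  have "\<epsilon> * (s * ln t) \<le> 0" using e Q0 by (simp add: mult_nonneg_nonpos)
  then have "-1 \<le> (1 - \<epsilon>) * s * ln t" using Q by (simp add: algebra_simps)
  then have "exp (-1) \<le> t powr ((1 - \<epsilon>) * s)" using t by (simp add: powr_def mult.commute mult.left_commute)
  then have "exp (2 + 10 * exp 20) * exp (-1) \<le> exp (2 + 10 * exp 20) * t powr ((1 - \<epsilon>) * s)"
    by (intro mult_left_mono) auto
  moreover have "(1::real) \<le> exp (2 + 10 * exp 20) * exp (-1)"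
  proof -
    have "exp (2 + 10 * exp 20) * exp (-1) = exp (1 + 10 * exp (20::real))"
      by (simp add: exp_add[symmetric])
    then show ?thesis by simp
  qed
  ultimately have "1 \<le> exp (2 + 10 * exp 20) * t powr ((1 - \<epsilon>) * s)" by linarith
  then show ?thesis unfolding e3 by simp
qed

lemma dd_alt:
  assumes "0 < t"
  shows "dickman_density (1/8 * s) t =
     (s / t) * (1/8) * exp (1/8 * s * ln t) * exp (- euler_mascheroni * (1/8 * s)) / Gamma (1/8 * s + 1)"
proof -
  have "t powr (1/8 * s - 1) = exp ((1/8 * s - 1) * ln t)"
    using assms by (simp add: powr_def)
  also have "(1/8 * s - 1) * ln t = 1/8 * s * ln t - ln t" by (simp add: algebra_simps)
  also have "exp (1/8 * s * ln t - ln t) = exp (1/8 * s * ln t) / t"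
    using assms by (simp add: exp_diff)
  finally have "t powr (1/8 * s - 1) = exp (1/8 * s * ln t) / t" .
  then show ?thesis unfolding dickman_density_def by (simp add: field_simps)
qed

lemma R2:
  assumes s: "0 < (s::real)" and t: "0 < t" "t \<le> 1" and ts: "t \<le> s"
  shows "(s / t) * exp (1 + 4 * s - (1 - 1/2) * s * ln (s / t)) \<le> 8 * exp (3 + 10 * exp 20) * dickman_density (1/8 * s) t"
proof -
  define P where "P = s * ln s"
  define Q where "Q = s * ln t"
  define Gm where "Gm = (s / 8 + 1) * ln (s / 8 + 1)"
  define g where "g = euler_mascheroni * (1/8 * s)"
  have G: "4 * s - 1/2 * P + s / 8 + Gm \<le> 10 * exp 20"
    using G2[OF s] unfolding P_def Gm_def by (simp add: mult.assoc)
  have Q0: "Q \<le> 0" unfolding Q_def using s t by (simp add: mult_nonneg_nonpos)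
  have gb: "g \<le> s / 8" unfolding g_def using euler_mascheroni_less_13_over_22 s
    by (simp add: mult_right_mono)
  have e1: "(1 - 1/2) * s * ln (s / t) = 1/2 * P - 1/2 * Q"
  proof -
    have l: "ln (s / t) = ln s - ln t" using s t by (simp add: ln_div)
    show ?thesis unfolding P_def Q_def l by (simp add: field_simps)
  qed
  have Gpos: "0 < Gamma (1/8 * s + 1)" using s by simp
  have Gle: "Gamma (1/8 * s + 1) \<le> exp Gm"
    using Gamma_le_pow[of "1/8 * s + 1"] s unfolding Gm_def by (simp add: add.commute)
  have "1 + 4 * s - (1/2 * P - 1/2 * Q) + Gm \<le> 3 + 10 * exp 20 + 1/8 * Q - g"
    using G Q0 gb by (simp add: algebra_simps)
  then have "exp (1 + 4 * s - (1/2 * P - 1/2 * Q)) * exp Gm \<le> exp (3 + 10 * exp 20 + 1/8 * Q - g)"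
    by (simp add: exp_add[symmetric])
  then have "exp (1 + 4 * s - (1/2 * P - 1/2 * Q)) \<le> exp (3 + 10 * exp 20 + 1/8 * Q - g) / exp Gm"
    by (simp add: field_simps)
  also have "\<dots> \<le> exp (3 + 10 * exp 20 + 1/8 * Q - g) / Gamma (1/8 * s + 1)"
    using Gpos Gle by (intro divide_left_mono) auto
  finally have main: "exp (1 + 4 * s - (1 - 1/2) * s * ln (s / t)) \<le>
      exp (3 + 10 * exp 20) * exp (1/8 * s * ln t) * exp (- euler_mascheroni * (1/8 * s)) / Gamma (1/8 * s + 1)"
    unfolding e1 Q_def g_def by (simp add: exp_add[symmetric] exp_diff mult.assoc)
  have st0: "0 \<le> s / t" using s t by simp
  have "(s / t) * exp (1 + 4 * s - (1 - 1/2) * s * ln (s / t)) \<le>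
      (s / t) * (exp (3 + 10 * exp 20) * exp (1/8 * s * ln t) * exp (- euler_mascheroni * (1/8 * s)) / Gamma (1/8 * s + 1))"
    using main st0 by (intro mult_left_mono) auto
  also have "\<dots> = 8 * exp (3 + 10 * exp 20) * dickman_density (1/8 * s) t"
    unfolding dd_alt[OF t(1)] by simp
  finally show ?thesis .
qed

lemma R2':
  assumes s: "0 < (s::real)" and t: "0 < t" "t \<le> 1" and st: "s < t"
  shows "(s / t) \<le> 8 * exp (3 + 10 * exp 20) * dickman_density (1/8 * s) t"
proof -
  have Q: "-1 \<le> 1/8 * s * ln t" using t_ln_t[of t "1/8 * s"] t st s by simp
  have g: "euler_mascheroni * (1/8 * s) \<le> 1"
  proof -
    have "euler_mascheroni * (1/8 * s) \<le> 1 * 1"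
      using euler_mascheroni_less_13_over_22 euler_mascheroni_pos s st t
      by (intro mult_mono) auto
    then show ?thesis by simp
  qed
  have Gpos: "0 < Gamma (1/8 * s + 1)" using s by simp
  have G1': "Gamma (1/8 * s + 1) \<le> 1" using s st t by (intro Gamma_le_1) auto
  have "(1::real) \<le> exp (3 + 10 * exp 20) * exp (-1) * exp (-1)"
  proof -
    have "exp (3 + 10 * exp 20) * exp (-1) * exp (-1) = exp (1 + 10 * exp (20::real))"
      by (simp add: exp_add[symmetric])
    then show ?thesis by simp
  qed
  also have "\<dots> \<le> exp (3 + 10 * exp 20) * exp (1/8 * s * ln t) * exp (- euler_mascheroni * (1/8 * s))"
    using Q g by (intro mult_mono) auto
  also have "\<dots> \<le> exp (3 + 10 * exp 20) * exp (1/8 * s * ln t) * exp (- euler_mascheroni * (1/8 * s)) / Gamma (1/8 * s + 1)"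
    using Gpos G1' by (simp add: le_divide_eq)
  finally have "s / t * 1 \<le> s / t * (exp (3 + 10 * exp 20) * exp (1/8 * s * ln t) * exp (- euler_mascheroni * (1/8 * s)) / Gamma (1/8 * s + 1))"
    using s t by (intro mult_left_mono) auto
  also have "\<dots> = 8 * exp (3 + 10 * exp 20) * dickman_density (1/8 * s) t"
    unfolding dd_alt[OF t(1)] by simp
  finally show ?thesis by simp
qed



lemma lnN_ge1: "3 \<le> N \<Longrightarrow> 1 \<le> ln (real N)"
proof -
  assume N3: "3 \<le> N"
  have "exp 1 \<le> real N" using exp_le N3 by linarith
  moreover have "0 < real N" using N3 by simp
  ultimately show ?thesis by (metis ln_exp ln_le_cancel_iff exp_gt_zero)
qed

lemma part1_pw:
  assumes rpos: "\<And>n. 1 \<le> n \<Longrightarrow> 0 < r n" and A0: "0 < A"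
    and N3: "3 \<le> N" and Abd: "\<And>n. real n * stepP r N n \<le> A / ln (real N)"
    and d0: "0 \<le> \<delta>" and d1: "\<delta> \<le> 1/2" and de: "\<delta> \<le> \<epsilon>" and e0: "0 < \<epsilon>"
    and n01: "1 \<le> n0" and n0L: "real n0 \<le> ln (real N)"
    and low: "\<And>n. n0 \<le> n \<Longrightarrow> n \<le> N \<Longrightarrow> (1 - \<delta>) / (real n * ln (real N)) \<le> stepP r N n"
    and k1: "1 \<le> k" and m1: "1 \<le> m" and mN: "m \<le> N"
  shows "tauP r N k m \<le> A * exp (2 + 10 * exp 20) * (1 / real N) *
     ((real k / ln (real N)) / (real m / real N)) *
     (real m / real N) powr ((1 - \<epsilon>) * (real k / ln (real N))) *
     exp (- (1/8) * (real k / ln (real N)) * logplus (1/8 * (real k / ln (real N))))"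
proof -
  define L where "L = ln (real N)"
  define s where "s = real k / L"
  define t where "t = real m / real N"
  define F where "F = exp (2 + 10 * exp 20) * t powr ((1 - \<epsilon>) * s) * exp (- (1/8) * s * logplus (1/8 * s))"
  have L1: "1 \<le> L" unfolding L_def by (rule lnN_ge1[OF N3])
  have N1: "1 \<le> N" using N3 by simp
  have s0: "0 < s" unfolding s_def using k1 L1 by simp
  have t0: "0 < t" unfolding t_def using m1 N1 by simp
  have t1: "t \<le> 1" unfolding t_def using mN N1 by (simp add: divide_le_eq_1)
  have F0: "0 \<le> F" unfolding F_def by simp
  have eqF: "A / L * real k / real m = A * (1 / real N) * (s / t)"
    unfolding s_def t_def using L1 N1 m1 by (simp add: field_simps)
  have pos: "0 \<le> A * (1 / real N) * (s / t)" using A0 s0 t0 by simp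
  have goal_eq: "A * exp (2 + 10 * exp 20) * (1 / real N) * (s / t) * t powr ((1 - \<epsilon>) * s) *
     exp (- (1/8) * s * logplus (1/8 * s)) = A * (1 / real N) * (s / t) * F"
    unfolding F_def by (simp only: ac_simps)
  have "tauP r N k m \<le> A * (1 / real N) * (s / t) * F"
  proof (cases "k \<le> m")
    case False
    then have "tauP r N k m = 0" by (intro tauP_zero) simp
    then show ?thesis using mult_nonneg_nonneg[OF pos F0] by simp
  next
    case km: True
    show ?thesis
    proof (cases "t \<le> s")
      case True
      have "tauP r N k m \<le> A / L * real k / real m *
         exp (1 + 4 * s - (1 - \<delta>) * s * ln (s / t))"
      proof -
        have d1': "\<delta> \<le> 1" using d1 by simp
        have ts': "real m / real N \<le> real k / ln (real N)" using True unfolding s_def t_def L_def .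
        show ?thesis unfolding s_def t_def L_def
          by (rule est2[OF rpos N1 Abd lnN_ge1[OF N3] d0 d1' n01 n0L low k1 km mN ts'])
      qed
      also have "\<dots> = A * (1 / real N) * (s / t) * exp (1 + 4 * s - (1 - \<delta>) * s * ln (s / t))"
        unfolding eqF ..
      also have "\<dots> \<le> A * (1 / real N) * (s / t) * F"
        unfolding F_def by (rule mult_left_mono[OF R1[OF s0 t0 t1 d0 d1 de] pos])
      finally show ?thesis .
    next
      case False
      have "tauP r N k m \<le> A / L * real k / real m"
        unfolding L_def by (rule est1[OF rpos N1 Abd k1 m1])
      also have "\<dots> = A * (1 / real N) * (s / t) * 1" unfolding eqF by simp
      also have "\<dots> \<le> A * (1 / real N) * (s / t) * F"
        unfolding F_def using False by (intro mult_left_mono[OF R1'[OF s0 t0 t1 _ e0] pos]) simp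
      finally show ?thesis .
    qed
  qed
  then have X: "tauP r N k m \<le> A * exp (2 + 10 * exp 20) * (1 / real N) * (s / t) * t powr ((1 - \<epsilon>) * s) *
     exp (- (1/8) * s * logplus (1/8 * s))" by (simp only: goal_eq)
  show ?thesis using X unfolding s_def t_def L_def .
qed

lemma part2_pw:
  assumes rpos: "\<And>n. 1 \<le> n \<Longrightarrow> 0 < r n" and A0: "0 < A"
    and N3: "3 \<le> N" and Abd: "\<And>n. real n * stepP r N n \<le> A / ln (real N)"
    and n01: "1 \<le> n0" and n0L: "real n0 \<le> ln (real N)"
    and low: "\<And>n. n0 \<le> n \<Longrightarrow> n \<le> N \<Longrightarrow> (1 - 1/2) / (real n * ln (real N)) \<le> stepP r N n"
    and k1: "1 \<le> k" and m1: "1 \<le> m" and mN: "m \<le> N"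
  shows "tauP r N k m \<le> 8 * A * exp (3 + 10 * exp 20) * (1 / real N) *
     dickman_density (1/8 * (real k / ln (real N))) (real m / real N)"
proof -
  define L where "L = ln (real N)"
  define s where "s = real k / L"
  define t where "t = real m / real N"
  define F where "F = 8 * exp (3 + 10 * exp 20) * dickman_density (1/8 * s) t"
  have L1: "1 \<le> L" unfolding L_def by (rule lnN_ge1[OF N3])
  have N1: "1 \<le> N" using N3 by simp
  have s0: "0 < s" unfolding s_def using k1 L1 by simp
  have t0: "0 < t" unfolding t_def using m1 N1 by simp
  have t1: "t \<le> 1" unfolding t_def using mN N1 by (simp add: divide_le_eq_1)
  have F0: "0 \<le> F" unfolding F_def dickman_density_def using s0 t0 by simp
  have eqF: "A / L * real k / real m = A * (1 / real N) * (s / t)"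
    unfolding s_def t_def using L1 N1 m1 by (simp add: field_simps)
  have A1: "0 \<le> A * (1 / real N)" using A0 by simp
  have "tauP r N k m \<le> A * (1 / real N) * F"
  proof (cases "k \<le> m")
    case False
    then have "tauP r N k m = 0" by (intro tauP_zero) simp
    then show ?thesis using mult_nonneg_nonneg[OF A1 F0] by simp
  next
    case km: True
    show ?thesis
    proof (cases "t \<le> s")
      case True
      have "tauP r N k m \<le> A / L * real k / real m *
         exp (1 + 4 * s - (1 - 1/2) * s * ln (s / t))"
      proof -
        have d0': "(0::real) \<le> 1/2" and d1': "(1/2::real) \<le> 1" by simp_all
        have ts': "real m / real N \<le> real k / ln (real N)" using True unfolding s_def t_def L_def .
        show ?thesis unfolding s_def t_def L_def
          by (rule est2[OF rpos N1 Abd lnN_ge1[OF N3] d0' d1' n01 n0L low k1 km mN ts'])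
      qed
      also have "\<dots> = A * (1 / real N) * ((s / t) * exp (1 + 4 * s - (1 - 1/2) * s * ln (s / t)))"
        unfolding eqF by simp
      also have "\<dots> \<le> A * (1 / real N) * F"
        unfolding F_def by (rule mult_left_mono[OF R2[OF s0 t0 t1 True] A1])
      finally show ?thesis .
    next
      case False
      have "tauP r N k m \<le> A / L * real k / real m"
        unfolding L_def by (rule est1[OF rpos N1 Abd k1 m1])
      also have "\<dots> = A * (1 / real N) * (s / t)" unfolding eqF by simp
      also have "\<dots> \<le> A * (1 / real N) * F"
        unfolding F_def using False by (intro mult_left_mono[OF R2'[OF s0 t0 t1] A1]) simp
      finally show ?thesis .
    qed
  qed
  moreover have eq2: "A * (1 / real N) * F = 8 * A * exp (3 + 10 * exp 20) * (1 / real N) * dickman_density (1/8 * s) t"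
    unfolding F_def by (simp only: ac_simps)
  ultimately have X: "tauP r N k m \<le> 8 * A * exp (3 + 10 * exp 20) * (1 / real N) * dickman_density (1/8 * s) t"
    by (simp only: eq2)
  show ?thesis using X unfolding s_def t_def L_def .
qed



theorem mainTheorem13:
  fixes r :: "nat \<Rightarrow> real" and a :: real
  assumes a_pos: "0 < a"
    and r_pos: "\<And>n. 1 \<le> n \<Longrightarrow> 0 < r n"
    and r_asymp: "((\<lambda>n. r n * real n) \<longlongrightarrow> a) sequentially"
  shows "\<exists>C c. 0 < C \<and> 0 < c \<and> c < 1 \<and>
     (\<forall>\<epsilon>>0. \<exists>N\<^sub>\<epsilon>::nat. \<forall>N\<ge>N\<^sub>\<epsilon>. \<forall>k::nat. \<forall>m::nat. 1 \<le> k \<longrightarrow> 1 \<le> m \<longrightarrow> m \<le> N \<longrightarrow>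
        (let s = real k / ln (real N); t = real m / real N in
          tauP r N k m \<le> C * (1 / real N) * (s / t) * t powr ((1 - \<epsilon>) * s)
                             * exp (- c * s * logplus (c * s)))) \<and>
     (\<exists>C'>0. \<exists>N\<^sub>0::nat. \<forall>N\<ge>N\<^sub>0. \<forall>k::nat. \<forall>m::nat. 1 \<le> k \<longrightarrow> 1 \<le> m \<longrightarrow> m \<le> N \<longrightarrow>
        (let s = real k / ln (real N); t = real m / real N in
          tauP r N k m \<le> C' * (1 / real N) * dickman_density (c * s) t))"
proof -
  obtain A N1 where A0: "0 < A"
    and AN: "\<forall>N\<ge>N1. 3 \<le> N \<and> (\<forall>n. real n * stepP r N n \<le> A / ln (real N))"
    using asym_A[OF a_pos r_pos r_asymp] by blast
  have P1: "\<forall>\<epsilon>>0. \<exists>N\<^sub>\<epsilon>::nat. \<forall>N\<ge>N\<^sub>\<epsilon>. \<forall>k::nat. \<forall>m::nat. 1 \<le> k \<longrightarrow> 1 \<le> m \<longrightarrow> m \<le> N \<longrightarrow>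
        (let s = real k / ln (real N); t = real m / real N in
          tauP r N k m \<le> A * exp (2 + 10 * exp 20) * (1 / real N) * (s / t) * t powr ((1 - \<epsilon>) * s)
                             * exp (- (1/8) * s * logplus ((1/8) * s)))"
  proof (intro allI impI)
    fix \<epsilon> :: real assume e0: "0 < \<epsilon>"
    define \<delta> where "\<delta> = min \<epsilon> (1/2)"
    have d0: "0 \<le> \<delta>" and d0': "0 < \<delta>" and d1: "\<delta> \<le> 1/2" and d1': "\<delta> \<le> 1" and de: "\<delta> \<le> \<epsilon>"
      unfolding \<delta>_def using e0 by auto
    obtain n0 where n01: "1 \<le> n0" and
      "\<exists>N2::nat. \<forall>N\<ge>N2. \<forall>n. n0 \<le> n \<longrightarrow> n \<le> N \<longrightarrow> (1 - \<delta>) / (real n * ln (real N)) \<le> stepP r N n"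
      using asym_low[OF a_pos r_pos r_asymp d0' d1'] by blast
    then obtain N2 where low: "\<forall>N\<ge>N2. \<forall>n. n0 \<le> n \<longrightarrow> n \<le> N \<longrightarrow> (1 - \<delta>) / (real n * ln (real N)) \<le> stepP r N n"
      by blast
    define Ne where "Ne = max (max N1 N2) (nat \<lceil>exp (real n0)\<rceil>)"
    show "\<exists>N\<^sub>\<epsilon>::nat. \<forall>N\<ge>N\<^sub>\<epsilon>. \<forall>k::nat. \<forall>m::nat. 1 \<le> k \<longrightarrow> 1 \<le> m \<longrightarrow> m \<le> N \<longrightarrow>
        (let s = real k / ln (real N); t = real m / real N in
          tauP r N k m \<le> A * exp (2 + 10 * exp 20) * (1 / real N) * (s / t) * t powr ((1 - \<epsilon>) * s)
                             * exp (- (1/8) * s * logplus ((1/8) * s)))"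
    proof (intro exI[of _ Ne] allI impI)
      fix N k m :: nat assume N: "Ne \<le> N" and k1: "1 \<le> k" and m1: "1 \<le> m" and mN: "m \<le> N"
      have N3: "3 \<le> N" and Abd: "\<And>n. real n * stepP r N n \<le> A / ln (real N)"
        using AN N unfolding Ne_def by auto
      have low': "\<And>n. n0 \<le> n \<Longrightarrow> n \<le> N \<Longrightarrow> (1 - \<delta>) / (real n * ln (real N)) \<le> stepP r N n"
        using low N unfolding Ne_def by auto
      have Npos: "0 < real N" using N3 by simp
      have "exp (real n0) \<le> real N"
      proof -
        have "exp (real n0) \<le> real (nat \<lceil>exp (real n0)\<rceil>)" by (rule real_nat_ceiling_ge)
        also have "\<dots> \<le> real N"
        proof -
          have "nat \<lceil>exp (real n0)\<rceil> \<le> N" using N unfolding Ne_def by simp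
          then show ?thesis by (simp only: of_nat_le_iff)
        qed
        finally show ?thesis .
      qed
      then have n0L: "real n0 \<le> ln (real N)" using Npos by (metis ln_exp ln_le_cancel_iff exp_gt_zero)
      show "let s = real k / ln (real N); t = real m / real N in
          tauP r N k m \<le> A * exp (2 + 10 * exp 20) * (1 / real N) * (s / t) * t powr ((1 - \<epsilon>) * s)
                             * exp (- (1/8) * s * logplus ((1/8) * s))"
        unfolding Let_def
        by (rule part1_pw[OF r_pos A0 N3 Abd d0 d1 de e0 n01 n0L low' k1 m1 mN])
    qed
  qed
  have P2: "\<exists>C'>0. \<exists>N\<^sub>0::nat. \<forall>N\<ge>N\<^sub>0. \<forall>k::nat. \<forall>m::nat. 1 \<le> k \<longrightarrow> 1 \<le> m \<longrightarrow> m \<le> N \<longrightarrow>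
        (let s = real k / ln (real N); t = real m / real N in
          tauP r N k m \<le> C' * (1 / real N) * dickman_density ((1/8) * s) t)"
  proof -
    have h0: "(0::real) < 1/2" and h1: "(1/2::real) \<le> 1" by simp_all
    obtain n0 where n01: "1 \<le> n0" and
      "\<exists>N2::nat. \<forall>N\<ge>N2. \<forall>n. n0 \<le> n \<longrightarrow> n \<le> N \<longrightarrow> (1 - 1/2) / (real n * ln (real N)) \<le> stepP r N n"
      using asym_low[OF a_pos r_pos r_asymp h0 h1] by blast
    then obtain N2 where low: "\<forall>N\<ge>N2. \<forall>n. n0 \<le> n \<longrightarrow> n \<le> N \<longrightarrow> (1 - 1/2) / (real n * ln (real N)) \<le> stepP r N n"
      by blast
    define Ne where "Ne = max (max N1 N2) (nat \<lceil>exp (real n0)\<rceil>)"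
    have "\<forall>N\<ge>Ne. \<forall>k::nat. \<forall>m::nat. 1 \<le> k \<longrightarrow> 1 \<le> m \<longrightarrow> m \<le> N \<longrightarrow>
        (let s = real k / ln (real N); t = real m / real N in
          tauP r N k m \<le> 8 * A * exp (3 + 10 * exp 20) * (1 / real N) * dickman_density ((1/8) * s) t)"
    proof (intro allI impI)
      fix N k m :: nat assume N: "Ne \<le> N" and k1: "1 \<le> k" and m1: "1 \<le> m" and mN: "m \<le> N"
      have N3: "3 \<le> N" and Abd: "\<And>n. real n * stepP r N n \<le> A / ln (real N)"
        using AN N unfolding Ne_def by auto
      have low': "\<And>n. n0 \<le> n \<Longrightarrow> n \<le> N \<Longrightarrow> (1 - 1/2) / (real n * ln (real N)) \<le> stepP r N n"
        using low N unfolding Ne_def by auto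
      have Npos: "0 < real N" using N3 by simp
      have "exp (real n0) \<le> real N"
      proof -
        have "exp (real n0) \<le> real (nat \<lceil>exp (real n0)\<rceil>)" by (rule real_nat_ceiling_ge)
        also have "\<dots> \<le> real N"
        proof -
          have "nat \<lceil>exp (real n0)\<rceil> \<le> N" using N unfolding Ne_def by simp
          then show ?thesis by (simp only: of_nat_le_iff)
        qed
        finally show ?thesis .
      qed
      then have n0L: "real n0 \<le> ln (real N)" using Npos by (metis ln_exp ln_le_cancel_iff exp_gt_zero)
      show "let s = real k / ln (real N); t = real m / real N in
          tauP r N k m \<le> 8 * A * exp (3 + 10 * exp 20) * (1 / real N) * dickman_density ((1/8) * s) t"
        unfolding Let_def
        by (rule part2_pw[OF r_pos A0 N3 Abd n01 n0L low' k1 m1 mN])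
    qed
    moreover have "0 < 8 * A * exp (3 + 10 * exp (20::real))" using A0 by simp
    ultimately show ?thesis by blast
  qed
  have C0: "0 < A * exp (2 + 10 * exp (20::real))" using A0 by simp
  show ?thesis
    apply (rule exI[of _ "A * exp (2 + 10 * exp 20)"])
    apply (rule exI[of _ "1/8"])
    apply (intro conjI)
        apply (rule C0)
       apply simp
      apply simp
     apply (rule P1)
    apply (rule P2)
    done
qed


end
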